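(* Let $\mathbf{G}\subseteq\mathrm{GL}(D)$ be a Lie group with Lie algebra $\mathfrak{g}$, let $L_1,\dots,L_l$ be a family of generators of $\mathfrak{g}$ (viewed as $D\times D$ matrices), and let $\tau$ be a representation of $\mathbf{G}$ on $\mathbb{K}^N$ ($\mathbb{K}\in\{\mathbb{R},\mathbb{C}\}$) with differential $d\tau$. Let $B_1,\dots,B_D\in M_{N\times N}(\mathbb{K})$. If the operator $\mathcal{D}_B=\sum_j B_j\partial/\partial x_j+mE$ is covariant with respect to $\tau$, then $$\sum_{k=1}^D (L_\alpha)_{jk}B_k=[B_j,d\tau(L_\alpha)]\qquad\forall\alpha\in\{1,\dots,l\},\ \forall j\in\{1,\dots,D\}.$$ If $\mathbf{G}$ is connected, this condition is also sufficient for covariance of $\mathcal{D}_B$ with respect to $\tau$.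
   Context: $\mathcal{D}_B$ (with $E$ the identity matrix, $m\in\mathbb{R}$) is called covariant with respect to $\tau$ if $\sum_{k=1}^D g_{jk}\,\tau(g)B_k\tau(g^{-1})=B_j$ for all $j$ and all $g\in\mathbf{G}$, equivalently if $\mathcal{D}_B$ commutes with all operators $(T_gf)(x)=\tau(g)f(g^{-1}x)$ on $C^\infty(\mathbb{R}^D,\mathbb{K}^N)$. *)

theory Defs
  imports "HOL-Analysis.Analysis"
begin

text \<open>Real D x D matrices are modelled as real^'D^'D with 'D a finite index type
  (so D = CARD('D)); K^N-matrices as 'k^'N^'N with 'k a real normed field (R or C).\<close>

fun matpow :: "'a::semiring_1^'n^'n \<Rightarrow> nat \<Rightarrow> 'a^'n^'n" where
  "matpow A 0 = mat 1"
| "matpow A (Suc n) = A ** matpow A n"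

definition mexp :: "real^'n^'n \<Rightarrow> real^'n^'n" where
  "mexp X = (\<Sum>n. (1 / fact n) *\<^sub>R matpow X n)"

definition GL :: "('a::semiring_1^'n^'n) set" where
  "GL = {A. invertible A}"

definition matrix_lie_group :: "(real^'n^'n) set \<Rightarrow> bool" where
  "matrix_lie_group G \<longleftrightarrow> G \<subseteq> GL \<and> mat 1 \<in> G
     \<and> (\<forall>g\<in>G. \<forall>h\<in>G. g ** h \<in> G) \<and> (\<forall>g\<in>G. matrix_inv g \<in> G)
     \<and> closedin (top_of_set GL) G"

definition lie_algebra :: "(real^'n^'n) set \<Rightarrow> (real^'n^'n) set" where
  "lie_algebra G = {X. \<forall>t::real. mexp (t *\<^sub>R X) \<in> G}"

definition representation ::
    "(real^'n^'n) set \<Rightarrow> (real^'n^'n \<Rightarrow> 'k::real_normed_field^'m^'m) \<Rightarrow> bool" where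
  "representation G \<tau> \<longleftrightarrow> continuous_on G \<tau> \<and> (\<forall>g\<in>G. \<tau> g \<in> GL)
     \<and> (\<forall>g\<in>G. \<forall>h\<in>G. \<tau> (g ** h) = \<tau> g ** \<tau> h)"

definition dtau ::
    "(real^'n^'n \<Rightarrow> 'k::real_normed_field^'m^'m) \<Rightarrow> real^'n^'n \<Rightarrow> 'k^'m^'m" where
  "dtau \<tau> X = vector_derivative (\<lambda>t::real. \<tau> (mexp (t *\<^sub>R X))) (at 0)"

text \<open>Covariance of D_B = sum_j B_j d/dx_j + mE with respect to tau
  (the mass term m E plays no role in the condition).\<close>
definition covariant ::
    "(real^'n^'n) set \<Rightarrow> (real^'n^'n \<Rightarrow> 'k::real_normed_field^'m^'m)
       \<Rightarrow> ('n \<Rightarrow> 'k^'m^'m) \<Rightarrow> bool" where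
  "covariant G \<tau> B \<longleftrightarrow> (\<forall>g\<in>G. \<forall>j.
      (\<Sum>k\<in>UNIV. (g $ j $ k) *\<^sub>R (\<tau> g ** B k ** \<tau> (matrix_inv g))) = B j)"

end

theory Submission
  imports Defs "HOL-Analysis.Analysis"
begin

typedef ('n::finite) sqm = "UNIV :: (real^'n^'n) set" morphisms mrep mabs by simp
setup_lifting type_definition_sqm

instantiation sqm :: (finite) real_normed_vector
begin
lift_definition zero_sqm :: "'a sqm" is "0" .
lift_definition plus_sqm :: "'a sqm \<Rightarrow> 'a sqm \<Rightarrow> 'a sqm" is "(+)" .
lift_definition minus_sqm :: "'a sqm \<Rightarrow> 'a sqm \<Rightarrow> 'a sqm" is "(-)" .
lift_definition uminus_sqm :: "'a sqm \<Rightarrow> 'a sqm" is "uminus" .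
lift_definition scaleR_sqm :: "real \<Rightarrow> 'a sqm \<Rightarrow> 'a sqm" is "scaleR" .
lift_definition norm_sqm :: "'a sqm \<Rightarrow> real" is "\<lambda>A. onorm (\<lambda>x. A *v x)" .
definition dist_sqm :: "'a sqm \<Rightarrow> 'a sqm \<Rightarrow> real" where "dist_sqm a b = norm (a - b)"
definition uniformity_sqm :: "('a sqm \<times> 'a sqm) filter" where
  "uniformity_sqm = (INF e\<in>{0 <..}. principal {(x, y). dist x y < e})"
definition open_sqm :: "'a sqm set \<Rightarrow> bool" where
  "open_sqm S = (\<forall>x\<in>S. \<forall>\<^sub>F (x', y) in uniformity. x' = x \<longrightarrow> y \<in> S)"
definition sgn_sqm :: "'a sqm \<Rightarrow> 'a sqm" where "sgn_sqm x = scaleR (inverse (norm x)) x"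
instance
proof
  fix a b c :: "'a sqm" and r s :: real
  show "a + b + c = a + (b + c)" by transfer (simp add: algebra_simps)
  show "a + b = b + a" by transfer (simp add: algebra_simps)
  show "0 + a = a" by transfer simp
  show "- a + a = 0" by transfer simp
  show "a - b = a + - b" by transfer simp
  show "r *\<^sub>R (a + b) = r *\<^sub>R a + r *\<^sub>R b" by transfer (simp add: algebra_simps)
  show "(r + s) *\<^sub>R a = r *\<^sub>R a + s *\<^sub>R a" by transfer (simp add: algebra_simps)
  show "r *\<^sub>R s *\<^sub>R a = (r * s) *\<^sub>R a" by transfer simp
  show "1 *\<^sub>R a = a" by transfer simp
  show "dist a b = norm (a - b)" by (simp add: dist_sqm_def)
  show "sgn a = inverse (norm a) *\<^sub>R a" by (simp add: sgn_sqm_def)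
  show "(uniformity :: ('a sqm \<times> 'a sqm) filter) = (INF e\<in>{0 <..}. principal {(x, y). dist x y < e})"
    by (simp add: uniformity_sqm_def)
  show "open U = (\<forall>x\<in>U. \<forall>\<^sub>F (x', y) in uniformity. x' = x \<longrightarrow> y \<in> U)" for U :: "'a sqm set"
    by (simp add: open_sqm_def)
  show "(norm a = 0) = (a = 0)"
    apply transfer
    subgoal for a using matrix_eq[of a 0] by (auto simp: onorm_eq_0)
    done
  show "norm (a + b) \<le> norm a + norm b"
    apply transfer
    subgoal for a b
      using onorm_triangle[OF matrix_vector_mul_bounded_linear[of a] matrix_vector_mul_bounded_linear[of b]]
      by (simp add: matrix_vector_mult_add_rdistrib[symmetric])
    done
  show "norm (r *\<^sub>R a) = \<bar>r\<bar> * norm a"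
    apply transfer
    subgoal for r a
      using onorm_scaleR[OF matrix_vector_mul_bounded_linear[of a], of r]
      by (simp add: scaleR_matrix_vector_assoc)
    done
qed
end

instantiation sqm :: (finite) ring_1
begin
lift_definition one_sqm :: "'a sqm" is "mat 1" .
lift_definition times_sqm :: "'a sqm \<Rightarrow> 'a sqm \<Rightarrow> 'a sqm" is "(**)" .
instance
proof
  fix a b c :: "'a sqm"
  show "a * b * c = a * (b * c)" by transfer (simp add: matrix_mul_assoc)
  show "1 * a = a" by transfer simp
  show "a * 1 = a" by transfer simp
  show "(a + b) * c = a * c + b * c" by transfer (vector matrix_matrix_mult_def sum.distrib distrib_right)
  show "a * (b + c) = a * b + a * c" by transfer (simp add: matrix_add_ldistrib)
qed (transfer, simp add: vec_eq_iff mat_def)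
end

instance sqm :: (finite) real_normed_algebra_1
proof
  fix a b :: "'a sqm" and r :: real
  show "r *\<^sub>R a * b = r *\<^sub>R (a * b)" by transfer (simp add: scalar_matrix_assoc)
  show "a * r *\<^sub>R b = r *\<^sub>R (a * b)" by transfer (simp add: matrix_scalar_ac scalar_matrix_assoc)
  show "norm (1::'a sqm) = 1" by transfer (simp add: onorm_id)
  show "norm (a * b) \<le> norm a * norm b"
    apply transfer
    using onorm_compose[OF matrix_vector_mul_bounded_linear matrix_vector_mul_bounded_linear]
    by (simp add: o_def matrix_vector_mul_assoc)
qed

lemma norm_vec_le_sum: "norm (x::'b::real_normed_vector^'m) \<le> (\<Sum>i\<in>UNIV. norm (x $ i))"
  unfolding norm_vec_def by (rule L2_set_le_sum) simp

lemma norm_mrep_le: "norm (mrep (A::'n::finite sqm)) \<le> real CARD('n) * real CARD('n) * norm A"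
proof -
  have "norm (mrep A) \<le> (\<Sum>i\<in>UNIV. norm (mrep A $ i))" by (rule norm_vec_le_sum)
  also have "\<dots> \<le> (\<Sum>i\<in>(UNIV::'n set). \<Sum>j\<in>(UNIV::'n set). norm A)"
  proof (rule sum_mono)
    fix i
    have "norm (mrep A $ i) \<le> (\<Sum>j\<in>UNIV. norm (mrep A $ i $ j))" by (rule norm_vec_le_sum)
    also have "\<dots> \<le> (\<Sum>j\<in>(UNIV::'n set). norm A)"
      by (rule sum_mono) (simp add: norm_sqm.rep_eq matrix_component_le_onorm)
    finally show "norm (mrep A $ i) \<le> (\<Sum>j\<in>(UNIV::'n set). norm A)" .
  qed
  finally show ?thesis by simp
qed

lemma abs_entry_le: "\<bar>(M::real^'m^'p) $ i $ j\<bar> \<le> norm M"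
proof -
  have "\<bar>M $ i $ j\<bar> \<le> norm (M $ i)" using component_le_norm_cart[of "M $ i" j] by simp
  also have "\<dots> \<le> norm M" by (rule Finite_Cartesian_Product.norm_nth_le)
  finally show ?thesis .
qed

lemma norm_le_mrep: "norm (A::'n::finite sqm) \<le> real CARD('n) * real CARD('n) * norm (mrep A)"
proof -
  have "norm A \<le> (\<Sum>i\<in>(UNIV::'n set). \<Sum>j\<in>(UNIV::'n set). \<bar>mrep A $ i $ j\<bar>)"
    unfolding norm_sqm.rep_eq by (rule onorm_le_matrix_component_sum)
  also have "\<dots> \<le> (\<Sum>i\<in>(UNIV::'n set). \<Sum>j\<in>(UNIV::'n set). norm (mrep A))"
    by (intro sum_mono abs_entry_le)
  finally show ?thesis by simp
qed

lemma bounded_linear_mrep: "bounded_linear (mrep :: 'n::finite sqm \<Rightarrow> _)"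
  apply (rule bounded_linear_intro[where K="real CARD('n) * real CARD('n)"])
    apply (simp add: plus_sqm.rep_eq)
   apply (simp add: scaleR_sqm.rep_eq)
  using norm_mrep_le by (simp add: mult.commute)

lemma bounded_linear_mabs: "bounded_linear (mabs :: _ \<Rightarrow> 'n::finite sqm)"
  apply (rule bounded_linear_intro[where K="real CARD('n) * real CARD('n)"])
    apply (simp add: plus_sqm.abs_eq)
   apply (simp add: scaleR_sqm.abs_eq)
  subgoal for x using norm_le_mrep[of "mabs x"] by (simp add: mabs_inverse mult.commute)
  done

instance sqm :: (finite) banach
proof
  fix X :: "nat \<Rightarrow> 'a sqm" assume "Cauchy X"
  then have "Cauchy (\<lambda>n. mrep (X n))" by (rule bounded_linear.Cauchy[OF bounded_linear_mrep])
  then obtain L where "(\<lambda>n. mrep (X n)) \<longlonglongrightarrow> L" using convergent_eq_Cauchy by blast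
  then have "(\<lambda>n. mabs (mrep (X n))) \<longlonglongrightarrow> mabs L"
    by (rule bounded_linear.tendsto[OF bounded_linear_mabs])
  then show "convergent X" by (auto simp: mrep_inverse convergent_def)
qed


lemma mrep_power: "mrep (x ^ n) = matpow (mrep x) n"
  by (induction n) (simp_all add: one_sqm.rep_eq times_sqm.rep_eq)

lemma mexp_eq: "mexp X = mrep (exp (mabs X))"
proof -
  have "(\<lambda>n. mrep ((mabs X) ^ n /\<^sub>R fact n)) sums mrep (exp (mabs X))"
    by (rule bounded_linear.sums[OF bounded_linear_mrep exp_converges])
  then have "(\<lambda>n. (1 / fact n) *\<^sub>R matpow X n) sums mrep (exp (mabs X))"
    by (simp add: scaleR_sqm.rep_eq mrep_power mabs_inverse divide_inverse)
  then show ?thesis unfolding mexp_def by (rule sums_unique[symmetric])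
qed

lemma mexp_zero[simp]: "mexp 0 = mat 1"
  by (simp add: mexp_eq zero_sqm.abs_eq[symmetric] one_sqm.rep_eq)

lemma mexp_add: "A ** B = B ** A \<Longrightarrow> mexp (A + B) = mexp A ** mexp B"
proof -
  assume c: "A ** B = B ** A"
  have "mabs A * mabs B = mabs B * mabs A"
    using c by (simp add: times_sqm.abs_eq)
  then have "exp (mabs A + mabs B) = exp (mabs A) * exp (mabs B)" by (rule exp_add_commuting)
  then show ?thesis
    by (simp add: mexp_eq plus_sqm.abs_eq times_sqm.rep_eq)
qed

lemma norm_sums_le:
  fixes a :: "nat \<Rightarrow> 'b::banach"
  assumes "a sums A" "b sums B" "\<And>n. norm (a n) \<le> b n"
  shows "norm A \<le> B"
proof -
  have sb: "summable b" using assms(2) by (simp add: sums_iff)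
  have sn: "summable (\<lambda>n. norm (a n))"
    by (rule summable_comparison_test'[OF sb]) (use assms(3) in auto)
  have "norm A = norm (\<Sum>n. a n)" using assms(1) by (simp add: sums_iff)
  also have "\<dots> \<le> (\<Sum>n. norm (a n))" by (rule summable_norm[OF sn])
  also have "\<dots> \<le> (\<Sum>n. b n)" by (rule suminf_le[OF _ sn sb]) (use assms(3) in auto)
  also have "\<dots> = B" using assms(2) by (simp add: sums_iff)
  finally show ?thesis .
qed

lemma pow_diff_bound:
  fixes x h :: "'b::real_normed_algebra_1"
  shows "norm ((x + h) ^ n - x ^ n) \<le> (norm x + norm h) ^ n - norm x ^ n"
proof (induction n)
  case 0 then show ?case by simp
next
  case (Suc n)
  have eq: "(x + h) ^ Suc n - x ^ Suc n = (x + h) * ((x + h) ^ n - x ^ n) + h * x ^ n"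
    by (simp add: algebra_simps)
  have "norm ((x + h) ^ Suc n - x ^ Suc n) \<le> norm ((x + h) * ((x + h) ^ n - x ^ n)) + norm (h * x ^ n)"
    unfolding eq by (rule norm_triangle_ineq)
  also have "\<dots> \<le> (norm x + norm h) * ((norm x + norm h) ^ n - norm x ^ n) + norm h * norm x ^ n"
  proof (rule add_mono)
    have "norm ((x + h) * ((x + h) ^ n - x ^ n)) \<le> norm (x + h) * norm ((x + h) ^ n - x ^ n)"
      by (rule norm_mult_ineq)
    also have "\<dots> \<le> (norm x + norm h) * ((norm x + norm h) ^ n - norm x ^ n)"
      by (rule mult_mono[OF norm_triangle_ineq Suc.IH]) auto
    finally show "norm ((x + h) * ((x + h) ^ n - x ^ n)) \<le> (norm x + norm h) * ((norm x + norm h) ^ n - norm x ^ n)" .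
    have "norm (h * x ^ n) \<le> norm h * norm (x ^ n)" by (rule norm_mult_ineq)
    also have "\<dots> \<le> norm h * norm x ^ n" by (rule mult_left_mono[OF norm_power_ineq]) auto
    finally show "norm (h * x ^ n) \<le> norm h * norm x ^ n" .
  qed
  also have "\<dots> = (norm x + norm h) ^ Suc n - norm x ^ Suc n" by (simp add: algebra_simps)
  finally show ?case .
qed

lemma exp_diff_bound:
  fixes x h :: "'b::{real_normed_algebra_1,banach}"
  shows "norm (exp (x + h) - exp x) \<le> exp (norm x + norm h) - exp (norm x)"
proof (rule norm_sums_le)
  show "(\<lambda>n. (x + h) ^ n /\<^sub>R fact n - x ^ n /\<^sub>R fact n) sums (exp (x + h) - exp x)"
    by (intro sums_diff exp_converges)
  show "(\<lambda>n. (norm x + norm h) ^ n /\<^sub>R fact n - norm x ^ n /\<^sub>R fact n) sums (exp (norm x + norm h) - exp (norm x))"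
    by (intro sums_diff exp_converges)
  fix n
  have "norm ((x + h) ^ n /\<^sub>R fact n - x ^ n /\<^sub>R fact n) = norm ((x + h) ^ n - x ^ n) / fact n"
    by (simp add: scaleR_diff_right[symmetric] divide_inverse mult.commute)
  also have "\<dots> \<le> ((norm x + norm h) ^ n - norm x ^ n) / fact n"
    by (intro divide_right_mono pow_diff_bound) simp
  finally show "norm ((x + h) ^ n /\<^sub>R fact n - x ^ n /\<^sub>R fact n) \<le> (norm x + norm h) ^ n /\<^sub>R fact n - norm x ^ n /\<^sub>R fact n"
    by (simp add: divide_inverse algebra_simps)
qed

lemma exp_two_bound:
  fixes h :: "'b::{real_normed_algebra_1,banach}"
  shows "norm (exp h - 1 - h) \<le> norm h ^ 2 * exp (norm h)"
proof (rule norm_sums_le)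
  have "summable (\<lambda>n. h ^ n /\<^sub>R fact n)" by (rule summable_exp_generic)
  then have "summable (\<lambda>n. h ^ (n + 2) /\<^sub>R fact (n + 2))" by (rule summable_ignore_initial_segment)
  then have "(\<lambda>n. inverse (fact (n + 2)) *\<^sub>R (h ^ (n + 2))) sums (\<Sum>n. inverse (fact (n + 2)) *\<^sub>R (h ^ (n + 2)))"
    by (simp add: summable_sums)
  then show "(\<lambda>n. inverse (fact (n + 2)) *\<^sub>R (h ^ (n + 2))) sums (exp h - 1 - h)"
    using exp_first_two_terms[of h] by simp
  show "(\<lambda>n. norm h ^ 2 * (norm h ^ n /\<^sub>R fact n)) sums (norm h ^ 2 * exp (norm h))"
    by (intro sums_mult exp_converges)
  fix n
  have "norm (inverse (fact (n + 2)) *\<^sub>R (h ^ (n + 2))) \<le> inverse (fact (n + 2)) * norm h ^ (n + 2)"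
    using mult_left_mono[OF norm_power_ineq[of h "n+2"], of "inverse (fact (n+2))"] by simp
  also have "\<dots> \<le> inverse (fact n) * norm h ^ (n + 2)"
  proof -
    have "fact n \<le> (fact (n+2)::real)" by (rule fact_mono) simp
    then show ?thesis by (intro mult_right_mono le_imp_inverse_le) auto
  qed
  also have "\<dots> = norm h ^ 2 * (norm h ^ n /\<^sub>R fact n)"
    by (simp add: power_add divide_inverse mult_ac power2_eq_square)
  finally show "norm (inverse (fact (n + 2)) *\<^sub>R (h ^ (n + 2))) \<le> norm h ^ 2 * (norm h ^ n /\<^sub>R fact n)" .
qed

lemma isCont_exp_gen: "isCont exp (x::'b::{real_normed_algebra_1,banach})"
proof -
  have "((\<lambda>h::'b. exp (norm x + norm h) - exp (norm x)) \<longlongrightarrow> exp (norm x + norm (0::'b)) - exp (norm x)) (at 0)"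
    by (intro tendsto_intros)
  then have t: "((\<lambda>h::'b. exp (norm x + norm h) - exp (norm x)) \<longlongrightarrow> 0) (at 0)" by simp
  have "((\<lambda>h::'b. exp (x + h) - exp x) \<longlongrightarrow> 0) (at 0)"
    by (rule Lim_null_comparison[OF _ t]) (rule always_eventually, simp add: exp_diff_bound)
  then have "((\<lambda>h::'b. exp (x + h)) \<longlongrightarrow> exp x) (at 0)" by (rule LIM_zero_cancel)
  then show ?thesis unfolding isCont_def by (simp add: LIM_offset_zero_iff)
qed

lemma exp_has_derivative_0: "(exp has_derivative (\<lambda>h. h)) (at (0::'b::{real_normed_algebra_1,banach}))"
  unfolding has_derivative_at
proof (intro conjI bounded_linear_ident)
  have "((\<lambda>h::'b. norm h * exp (norm h)) \<longlongrightarrow> norm (0::'b) * exp (norm (0::'b))) (at 0)"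
    by (intro tendsto_intros)
  then have t: "((\<lambda>h::'b. norm h * exp (norm h)) \<longlongrightarrow> 0) (at 0)" by simp
  show "((\<lambda>h. norm (exp (0 + h) - exp 0 - h) / norm h) \<longlongrightarrow> 0) (at (0::'b))"
  proof (rule Lim_null_comparison[OF _ t])
    show "\<forall>\<^sub>F h in at 0. norm (norm (exp (0 + h) - exp 0 - h) / norm h) \<le> norm h * exp (norm (h::'b))"
      unfolding eventually_at_filter
    proof (rule always_eventually, intro allI impI)
      fix h :: 'b assume "h \<noteq> 0"
      then have "norm h > 0" by simp
      have "norm (exp h - 1 - h) \<le> norm h ^ 2 * exp (norm h)" by (rule exp_two_bound)
      then have "norm (exp h - 1 - h) / norm h \<le> norm h * exp (norm h)"
        using \<open>norm h > 0\<close> by (simp add: divide_le_eq power2_eq_square mult_ac)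
      then show "norm (norm (exp (0 + h) - exp 0 - h) / norm h) \<le> norm h * exp (norm h)" by simp
    qed
  qed
qed

lemma isCont_mexp: "isCont mexp X"
proof -
  have "isCont (\<lambda>X. mrep (exp (mabs X))) X"
    by (intro isCont_o2[OF _ linear_continuous_at[OF bounded_linear_mrep]]
        isCont_o2[OF _ isCont_exp_gen] linear_continuous_at[OF bounded_linear_mabs])
  then show ?thesis by (simp add: mexp_eq[abs_def])
qed

lemma continuous_on_mexp: "continuous_on S mexp"
  by (simp add: continuous_at_imp_continuous_on isCont_mexp)

lemma mexp_has_derivative_0: "(mexp has_derivative (\<lambda>H. H)) (at 0)"
proof -
  have "((\<lambda>X. mrep (exp (mabs X))) has_derivative (\<lambda>H. mrep (mabs H))) (at 0)"
  proof -
    have d1: "(mabs has_derivative mabs) (at (0::real^'n^'n))"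
      by (rule bounded_linear_imp_has_derivative[OF bounded_linear_mabs])
    have d2: "(exp has_derivative (\<lambda>h. h)) (at (mabs (0::real^'n^'n)))"
      using exp_has_derivative_0 by (simp add: zero_sqm.abs_eq[symmetric])
    have d3: "(mrep has_derivative mrep) (at ((exp \<circ> mabs) (0::real^'n^'n)))"
      by (rule bounded_linear_imp_has_derivative[OF bounded_linear_mrep])
    from diff_chain_at[OF diff_chain_at[OF d1 d2] d3] show ?thesis by (simp add: o_def)
  qed
  then show ?thesis by (simp add: mexp_eq[abs_def] mabs_inverse)
qed

lemma matrix_inv_props:
  fixes A :: "'a::semiring_1^'n^'n"
  assumes "invertible A"
  shows "A ** matrix_inv A = mat 1" "matrix_inv A ** A = mat 1"
proof -
  have "\<exists>A'. A ** A' = mat 1 \<and> A' ** A = mat 1" using assms by (simp add: invertible_def)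
  then have "A ** matrix_inv A = mat 1 \<and> matrix_inv A ** A = mat 1"
    unfolding matrix_inv_def by (rule someI_ex)
  then show "A ** matrix_inv A = mat 1" "matrix_inv A ** A = mat 1" by auto
qed

lemma matrix_inv_unique:
  fixes A B :: "'a::semiring_1^'n^'n"
  assumes "A ** B = mat 1" "B ** A = mat 1"
  shows "matrix_inv A = B" "invertible A"
proof -
  show inv: "invertible A" using assms by (auto simp: invertible_def)
  have "B = B ** (A ** matrix_inv A)" using matrix_inv_props[OF inv] by simp
  also have "\<dots> = matrix_inv A" by (simp add: matrix_mul_assoc assms)
  finally show "matrix_inv A = B" by simp
qed

lemma matrix_add_rdistrib': "((A::'a::semiring_1^'n^'m) + B) ** C = A ** C + B ** C"
  by (vector matrix_matrix_mult_def sum.distrib distrib_right)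

lemma norm_entry_le: "norm ((M::'a::real_normed_vector^'m^'p) $ i $ j) \<le> norm M"
  using Finite_Cartesian_Product.norm_nth_le[of "M $ i" j] Finite_Cartesian_Product.norm_nth_le[of M i]
  by linarith

lemma norm_matmul_le:
  fixes A :: "'a::real_normed_field^'n^'m" and B :: "'a^'p^'n"
  shows "norm (A ** B) \<le> norm A * norm B * (real CARD('m) * real CARD('p) * real CARD('n))"
proof -
  have e: "norm ((A ** B) $ i $ j) \<le> real CARD('n) * (norm A * norm B)" for i j
  proof -
    have "norm ((A ** B) $ i $ j) = norm (\<Sum>k\<in>UNIV. A $ i $ k * B $ k $ j)"
      by (simp add: matrix_matrix_mult_def)
    also have "\<dots> \<le> (\<Sum>k\<in>UNIV. norm (A $ i $ k * B $ k $ j))" by (rule norm_sum)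
    also have "\<dots> \<le> (\<Sum>k\<in>(UNIV::'n set). norm A * norm B)"
      by (rule sum_mono) (simp add: norm_mult mult_mono norm_entry_le)
    finally show ?thesis by simp
  qed
  have "norm (A ** B) \<le> (\<Sum>i\<in>UNIV. norm ((A ** B) $ i))" by (rule norm_vec_le_sum)
  also have "\<dots> \<le> (\<Sum>i\<in>(UNIV::'m set). \<Sum>j\<in>(UNIV::'p set). real CARD('n) * (norm A * norm B))"
    by (intro sum_mono order_trans[OF norm_vec_le_sum] e)
  finally show ?thesis by (simp add: mult_ac)
qed

lemma bounded_bilinear_matmul:
  "bounded_bilinear ((**) :: 'a::real_normed_field^'n^'m \<Rightarrow> 'a^'p^'n \<Rightarrow> 'a^'p^'m)"
proof
  fix a a' :: "'a^'n^'m" and b b' :: "'a^'p^'n" and r :: real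
  show "(a + a') ** b = a ** b + a' ** b" by (rule matrix_add_rdistrib')
  show "a ** (b + b') = a ** b + a ** b'" by (rule matrix_add_ldistrib)
  show "r *\<^sub>R a ** b = r *\<^sub>R (a ** b)" by (simp add: scalar_matrix_assoc)
  show "a ** r *\<^sub>R b = r *\<^sub>R (a ** b)" by (simp add: matrix_scalar_ac scalar_matrix_assoc)
  show "\<exists>K. \<forall>a b. norm ((a::'a^'n^'m) ** (b::'a^'p^'n)) \<le> norm a * norm b * K"
    using norm_matmul_le by blast
qed

lemmas matmul_vd = bounded_bilinear.has_vector_derivative[OF bounded_bilinear_matmul]
lemmas matmul_fd = bounded_bilinear.FDERIV[OF bounded_bilinear_matmul]

lemma matpow_mul_comm: "matpow A n ** A = A ** matpow A n"
  by (induction n) (simp_all add: matrix_mul_assoc[symmetric])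

lemma mexp_scaled_add: "mexp (s *\<^sub>R X) ** mexp (t *\<^sub>R X) = mexp ((s + t) *\<^sub>R X)"
  by (simp add: mexp_add[symmetric] matrix_scalar_ac scalar_matrix_assoc[symmetric] scaleR_add_left)

lemma mexp_neg: "mexp X ** mexp (- X) = mat 1" "mexp (- X) ** mexp X = mat 1"
  using mexp_scaled_add[of 1 X "-1"] mexp_scaled_add[of "-1" X 1] by simp_all

lemma mexp_invertible: "invertible (mexp X)"
  using matrix_inv_unique(2)[OF mexp_neg] .

lemma matrix_inv_mexp: "matrix_inv (mexp X) = mexp (- X)"
  using matrix_inv_unique(1)[OF mexp_neg] .

lemma mexp_nat: "mexp (real n *\<^sub>R Y) = matpow (mexp Y) n"
proof (induction n)
  case 0 then show ?case by simp
next
  case (Suc n)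
  have "mexp (real (Suc n) *\<^sub>R Y) = mexp (1 *\<^sub>R Y) ** mexp (real n *\<^sub>R Y)"
    using mexp_scaled_add[of 1 Y "real n"] by (simp add: add.commute)
  then show ?case using Suc by simp
qed

lemma mexp_line_vd: "((\<lambda>t. mexp (t *\<^sub>R X)) has_vector_derivative X) (at 0)"
proof -
  have l: "((\<lambda>t::real. t *\<^sub>R X) has_derivative (\<lambda>t. t *\<^sub>R X)) (at 0)"
    by (intro derivative_eq_intros) auto
  have "(mexp has_derivative (\<lambda>H. H)) (at ((\<lambda>t::real. t *\<^sub>R X) 0))"
    using mexp_has_derivative_0 by simp
  from diff_chain_at[OF l this] show ?thesis
    by (simp add: has_vector_derivative_def o_def)
qed

definition Fj :: "(real^'n^'n \<Rightarrow> 'k::real_normed_field^'m^'m) \<Rightarrow> ('n \<Rightarrow> 'k^'m^'m) \<Rightarrow> real^'n^'n \<Rightarrow> 'n \<Rightarrow> real \<Rightarrow> 'k^'m^'m" where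
  "Fj \<tau> B X j t = (\<Sum>k\<in>UNIV. (mexp (t *\<^sub>R X) $ j $ k) *\<^sub>R (\<tau> (mexp (t *\<^sub>R X)) ** B k ** \<tau> (mexp ((-t) *\<^sub>R X))))"

lemma entry_vd:
  fixes f :: "real \<Rightarrow> 'a::real_normed_vector^'p^'q"
  assumes "(f has_vector_derivative f') F"
  shows "((\<lambda>t. f t $ j $ k) has_vector_derivative (f' $ j $ k)) F"
proof -
  have "bounded_linear (\<lambda>M::'a::real_normed_vector^'p^'q. M $ j $ k)"
    using bounded_linear_compose[OF bounded_linear_vec_nth[where i=k] bounded_linear_vec_nth[where i=j]]
    by (simp add: o_def)
  from bounded_linear.has_vector_derivative[OF this assms] show ?thesis .
qed

lemma mat1_entry: "(mat 1 :: 'a::zero_neq_one^'n^'n) $ j $ k = (if j = k then 1 else 0)"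
  by (simp add: mat_def)

lemma Fj_vd:
  fixes \<tau> :: "real^'n^'n \<Rightarrow> 'k::real_normed_field^'m^'m"
  assumes d: "(\<lambda>t::real. \<tau> (mexp (t *\<^sub>R X))) differentiable (at 0)"
    and one: "\<tau> (mat 1) = mat 1"
  shows "(Fj \<tau> B X j has_vector_derivative
           ((\<Sum>k\<in>UNIV. (X $ j $ k) *\<^sub>R B k) + dtau \<tau> X ** B j - B j ** dtau \<tau> X)) (at 0)"
proof -
  define A where "A = dtau \<tau> X"
  define T where "T = (\<lambda>t::real. \<tau> (mexp (t *\<^sub>R X)))"
  have T: "(T has_vector_derivative A) (at 0)"
    using d unfolding A_def dtau_def T_def by (rule vector_derivative_works[THEN iffD1])
  have Tm: "((\<lambda>t. \<tau> (mexp ((-t) *\<^sub>R X))) has_vector_derivative (- A)) (at 0)"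
  proof -
    have u: "((\<lambda>t::real. - t) has_vector_derivative (-1)) (at 0)"
      by (intro derivative_eq_intros) auto
    have "(T has_vector_derivative A) (at ((\<lambda>t::real. - t) 0))" using T by simp
    from vector_diff_chain_at[OF u this] show ?thesis by (simp add: T_def o_def)
  qed
  have T': "((\<lambda>t. \<tau> (mexp (t *\<^sub>R X))) has_vector_derivative A) (at 0)" using T by (simp add: T_def)
  have T0: "T 0 = mat 1" by (simp add: T_def one)
  have Tm0: "\<tau> (mexp ((- 0) *\<^sub>R X)) = mat 1" by (simp add: one)
  have E: "((\<lambda>t. mexp (t *\<^sub>R X) $ j $ k) has_field_derivative (X $ j $ k)) (at 0)" for k
    using entry_vd[OF mexp_line_vd] by (simp add: has_real_derivative_iff_has_vector_derivative)
  have P0: "((\<lambda>t. \<tau> (mexp (t *\<^sub>R X)) ** B k ** \<tau> (mexp ((-t) *\<^sub>R X))) has_vector_derivative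
            (\<tau> (mexp (0 *\<^sub>R X)) ** B k ** (- A) + (\<tau> (mexp (0 *\<^sub>R X)) ** 0 + A ** B k) ** \<tau> (mexp ((- 0) *\<^sub>R X)))) (at 0)" for k
    by (intro matmul_vd T' Tm has_vector_derivative_const)
  have P: "((\<lambda>t. \<tau> (mexp (t *\<^sub>R X)) ** B k ** \<tau> (mexp ((-t) *\<^sub>R X))) has_vector_derivative
            (A ** B k - B k ** A)) (at 0)" for k
    using P0[of k] by (simp add: one bounded_bilinear.minus_right[OF bounded_bilinear_matmul])
  have S: "((\<lambda>t. (mexp (t *\<^sub>R X) $ j $ k) *\<^sub>R (\<tau> (mexp (t *\<^sub>R X)) ** B k ** \<tau> (mexp ((-t) *\<^sub>R X))))
            has_vector_derivative ((if j = k then 1 else 0) *\<^sub>R (A ** B k - B k ** A) + (X $ j $ k) *\<^sub>R B k)) (at 0)" for k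
    using has_vector_derivative_scaleR[OF E[of k] P[of k]] by (simp add: one mat1_entry)
  have "(Fj \<tau> B X j has_vector_derivative
          (\<Sum>k\<in>UNIV. (if j = k then 1 else 0) *\<^sub>R (A ** B k - B k ** A) + (X $ j $ k) *\<^sub>R B k)) (at 0)"
    unfolding Fj_def by (intro has_vector_derivative_sum S)
  also have "(\<Sum>k\<in>UNIV. (if j = k then 1 else 0) *\<^sub>R (A ** B k - B k ** A) + (X $ j $ k) *\<^sub>R B k)
      = (\<Sum>k\<in>UNIV. (X $ j $ k) *\<^sub>R B k) + A ** B j - B j ** A"
    by (simp add: sum.distrib if_distrib[of "\<lambda>c. c *\<^sub>R _"] sum.delta cong: if_cong)
  finally show ?thesis unfolding A_def .
qed

lemma tau_one:
  assumes rep: "representation G \<tau>" and one: "mat 1 \<in> G"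
  shows "\<tau> (mat 1) = mat 1"
proof -
  have m: "\<tau> (mat 1) = \<tau> (mat 1) ** \<tau> (mat 1)"
    using rep one unfolding representation_def by (metis matrix_mul_lid)
  have "invertible (\<tau> (mat 1))" using rep one unfolding representation_def GL_def by auto
  note i = matrix_inv_props[OF this]
  have "mat 1 = matrix_inv (\<tau> (mat 1)) ** (\<tau> (mat 1) ** \<tau> (mat 1))"
    using i m by simp
  also have "\<dots> = \<tau> (mat 1)" by (simp add: matrix_mul_assoc i)
  finally show ?thesis by simp
qed

lemma tau_inv:
  assumes G: "matrix_lie_group G" and rep: "representation G \<tau>" and g: "g \<in> G"
  shows "\<tau> g ** \<tau> (matrix_inv g) = mat 1" "\<tau> (matrix_inv g) ** \<tau> g = mat 1"
proof -
  have gi: "invertible g" "matrix_inv g \<in> G" "mat 1 \<in> G"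
    using G g unfolding matrix_lie_group_def GL_def by auto
  note i = matrix_inv_props[OF gi(1)]
  have one: "\<tau> (mat 1) = mat 1" by (rule tau_one[OF rep gi(3)])
  have hom: "\<And>a b. a \<in> G \<Longrightarrow> b \<in> G \<Longrightarrow> \<tau> (a ** b) = \<tau> a ** \<tau> b"
    using rep unfolding representation_def by auto
  show "\<tau> g ** \<tau> (matrix_inv g) = mat 1" using hom[OF g gi(2)] i one by simp
  show "\<tau> (matrix_inv g) ** \<tau> g = mat 1" using hom[OF gi(2) g] i one by simp
qed

lemma Fj_const_cov:
  assumes cov: "covariant G \<tau> B" and X: "X \<in> lie_algebra G"
  shows "Fj \<tau> B X j t = B j"
proof -
  have "mexp (t *\<^sub>R X) \<in> G" using X by (simp add: lie_algebra_def)
  then have "(\<Sum>k\<in>UNIV. (mexp (t *\<^sub>R X) $ j $ k) *\<^sub>R (\<tau> (mexp (t *\<^sub>R X)) ** B k ** \<tau> (matrix_inv (mexp (t *\<^sub>R X))))) = B j"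
    using cov unfolding covariant_def by blast
  then show ?thesis unfolding Fj_def matrix_inv_mexp by simp
qed

lemma direction1:
  assumes G: "matrix_lie_group G" and rep: "representation G \<tau>"
    and X: "X \<in> lie_algebra G"
    and d: "(\<lambda>t::real. \<tau> (mexp (t *\<^sub>R X))) differentiable (at 0)"
    and cov: "covariant G \<tau> B"
  shows "(\<Sum>k\<in>UNIV. (X $ j $ k) *\<^sub>R B k) = B j ** dtau \<tau> X - dtau \<tau> X ** B j"
proof -
  have one: "\<tau> (mat 1) = mat 1" using G rep tau_one unfolding matrix_lie_group_def by blast
  have "Fj \<tau> B X j = (\<lambda>t. B j)" using Fj_const_cov[OF cov X] by auto
  then have "(Fj \<tau> B X j has_vector_derivative 0) (at 0)" by simp
  from vector_derivative_unique_at[OF Fj_vd[OF d one] this]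
  show ?thesis by (simp add: algebra_simps eq_diff_eq)
qed

lemmas mm_sum_left = bounded_bilinear.sum_left[OF bounded_bilinear_matmul]
lemmas mm_sum_right = bounded_bilinear.sum_right[OF bounded_bilinear_matmul]
lemmas mm_scaleR_left = bounded_bilinear.scaleR_left[OF bounded_bilinear_matmul]
lemmas mm_scaleR_right = bounded_bilinear.scaleR_right[OF bounded_bilinear_matmul]

lemma matmul_entry: "(P ** Q) $ j $ k = (\<Sum>i\<in>UNIV. P $ j $ i * Q $ i $ k)"
  by (simp add: matrix_matrix_mult_def)

lemma cov_comp:
  fixes P Q :: "real^'n^'n" and S1 S2 R1 R2 :: "'k::real_normed_field^'m^'m" and B :: "'n \<Rightarrow> 'k^'m^'m"
  shows "(\<Sum>i\<in>UNIV. (P $ j $ i) *\<^sub>R (S1 ** (\<Sum>k\<in>UNIV. (Q $ i $ k) *\<^sub>R (S2 ** B k ** R2)) ** R1))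
       = (\<Sum>k\<in>UNIV. ((P ** Q) $ j $ k) *\<^sub>R (S1 ** S2 ** B k ** (R2 ** R1)))"
proof -
  have "(\<Sum>i\<in>UNIV. (P $ j $ i) *\<^sub>R (S1 ** (\<Sum>k\<in>UNIV. (Q $ i $ k) *\<^sub>R (S2 ** B k ** R2)) ** R1))
      = (\<Sum>i\<in>UNIV. \<Sum>k\<in>UNIV. (P $ j $ i * Q $ i $ k) *\<^sub>R (S1 ** S2 ** B k ** (R2 ** R1)))"
    by (simp add: mm_sum_left mm_sum_right mm_scaleR_left mm_scaleR_right scaleR_sum_right matrix_mul_assoc)
  also have "\<dots> = (\<Sum>k\<in>UNIV. \<Sum>i\<in>UNIV. (P $ j $ i * Q $ i $ k) *\<^sub>R (S1 ** S2 ** B k ** (R2 ** R1)))"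
    by (rule sum.swap)
  also have "\<dots> = (\<Sum>k\<in>UNIV. ((P ** Q) $ j $ k) *\<^sub>R (S1 ** S2 ** B k ** (R2 ** R1)))"
    by (simp add: matrix_matrix_mult_def scaleR_sum_left)
  finally show ?thesis .
qed

definition Hset :: "(real^'n^'n) set \<Rightarrow> (real^'n^'n \<Rightarrow> 'k::real_normed_field^'m^'m) \<Rightarrow> ('n \<Rightarrow> 'k^'m^'m) \<Rightarrow> (real^'n^'n) set" where
  "Hset G \<tau> B = {g\<in>G. \<forall>j. (\<Sum>k\<in>UNIV. (g $ j $ k) *\<^sub>R (\<tau> g ** B k)) = B j ** \<tau> g}"

lemma cov_iff_H:
  assumes G: "matrix_lie_group G" and rep: "representation G \<tau>" and g: "g \<in> G"
  shows "(\<Sum>k\<in>UNIV. (g $ j $ k) *\<^sub>R (\<tau> g ** B k ** \<tau> (matrix_inv g))) = B j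
     \<longleftrightarrow> (\<Sum>k\<in>UNIV. (g $ j $ k) *\<^sub>R (\<tau> g ** B k)) = B j ** \<tau> g"
proof
  note ti = tau_inv[OF G rep g]
  assume a: "(\<Sum>k\<in>UNIV. (g $ j $ k) *\<^sub>R (\<tau> g ** B k ** \<tau> (matrix_inv g))) = B j"
  have "(\<Sum>k\<in>UNIV. (g $ j $ k) *\<^sub>R (\<tau> g ** B k ** \<tau> (matrix_inv g))) ** \<tau> g = B j ** \<tau> g"
    using a by simp
  then show "(\<Sum>k\<in>UNIV. (g $ j $ k) *\<^sub>R (\<tau> g ** B k)) = B j ** \<tau> g"
    by (simp add: mm_sum_left mm_scaleR_left matrix_mul_assoc[symmetric] ti)
next
  note ti = tau_inv[OF G rep g]
  assume a: "(\<Sum>k\<in>UNIV. (g $ j $ k) *\<^sub>R (\<tau> g ** B k)) = B j ** \<tau> g"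
  have "(\<Sum>k\<in>UNIV. (g $ j $ k) *\<^sub>R (\<tau> g ** B k)) ** \<tau> (matrix_inv g) = B j ** \<tau> g ** \<tau> (matrix_inv g)"
    using a by simp
  then show "(\<Sum>k\<in>UNIV. (g $ j $ k) *\<^sub>R (\<tau> g ** B k ** \<tau> (matrix_inv g))) = B j"
    by (simp add: mm_sum_left mm_scaleR_left matrix_mul_assoc[symmetric] ti)
qed

lemma H_mult:
  assumes G: "matrix_lie_group G" and rep: "representation G \<tau>"
    and g: "g \<in> Hset G \<tau> B" and h: "h \<in> Hset G \<tau> B"
  shows "g ** h \<in> Hset G \<tau> B"
proof -
  have gG: "g \<in> G" and hG: "h \<in> G" using g h by (auto simp: Hset_def)
  have ghG: "g ** h \<in> G" using G gG hG by (auto simp: matrix_lie_group_def)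
  have hom: "\<tau> (g ** h) = \<tau> g ** \<tau> h" using rep gG hG by (auto simp: representation_def)
  have Hg: "\<And>j. (\<Sum>k\<in>UNIV. (g $ j $ k) *\<^sub>R (\<tau> g ** B k)) = B j ** \<tau> g" using g by (auto simp: Hset_def)
  have Hh: "\<And>j. (\<Sum>k\<in>UNIV. (h $ j $ k) *\<^sub>R (\<tau> h ** B k)) = B j ** \<tau> h" using h by (auto simp: Hset_def)
  have "(\<Sum>k\<in>UNIV. ((g ** h) $ j $ k) *\<^sub>R (\<tau> (g ** h) ** B k)) = B j ** \<tau> (g ** h)" for j
  proof -
    have "(\<Sum>k\<in>UNIV. ((g ** h) $ j $ k) *\<^sub>R (\<tau> (g ** h) ** B k))
        = (\<Sum>k\<in>UNIV. \<Sum>i\<in>UNIV. (g $ j $ i * h $ i $ k) *\<^sub>R (\<tau> g ** \<tau> h ** B k))"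
      by (simp add: hom matmul_entry scaleR_sum_left)
    also have "\<dots> = (\<Sum>i\<in>UNIV. \<Sum>k\<in>UNIV. (g $ j $ i * h $ i $ k) *\<^sub>R (\<tau> g ** \<tau> h ** B k))"
      by (rule sum.swap)
    also have "\<dots> = (\<Sum>i\<in>UNIV. (g $ j $ i) *\<^sub>R (\<tau> g ** (\<Sum>k\<in>UNIV. (h $ i $ k) *\<^sub>R (\<tau> h ** B k))))"
      by (simp add: mm_sum_right mm_scaleR_right scaleR_sum_right matrix_mul_assoc)
    also have "\<dots> = (\<Sum>i\<in>UNIV. (g $ j $ i) *\<^sub>R (\<tau> g ** B i)) ** \<tau> h"
      by (simp add: Hh mm_sum_left mm_scaleR_left matrix_mul_assoc)
    also have "\<dots> = B j ** \<tau> (g ** h)" by (simp add: Hg hom matrix_mul_assoc)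
    finally show ?thesis .
  qed
  then show ?thesis using ghG by (simp add: Hset_def)
qed

lemma Fj_zero:
  assumes one: "\<tau> (mat 1) = mat 1"
  shows "Fj \<tau> B X j 0 = B j"
  by (simp add: Fj_def one mat1_entry if_distrib[of "\<lambda>c. c *\<^sub>R _"] sum.delta cong: if_cong)

lemma Fj_const:
  fixes \<tau> :: "real^'n^'n \<Rightarrow> 'k::real_normed_field^'m^'m"
  assumes G: "matrix_lie_group G" and rep: "representation G \<tau>"
    and X: "X \<in> lie_algebra G"
    and d: "(\<lambda>t::real. \<tau> (mexp (t *\<^sub>R X))) differentiable (at 0)"
    and cond: "\<forall>j. (\<Sum>k\<in>UNIV. (X $ j $ k) *\<^sub>R B k) = B j ** dtau \<tau> X - dtau \<tau> X ** B j"
  shows "Fj \<tau> B X j t = B j"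
proof -
  have one: "\<tau> (mat 1) = mat 1" using G rep tau_one unfolding matrix_lie_group_def by blast
  have inG: "mexp (t *\<^sub>R X) \<in> G" for t using X by (simp add: lie_algebra_def)
  have hom: "\<And>a b. a \<in> G \<Longrightarrow> b \<in> G \<Longrightarrow> \<tau> (a ** b) = \<tau> a ** \<tau> b"
    using rep unfolding representation_def by auto
  have d0: "(Fj \<tau> B X i has_vector_derivative 0) (at 0)" for i
    using Fj_vd[OF d one, of B i] cond by simp
  have shift: "Fj \<tau> B X j (t + s) = (\<Sum>i\<in>UNIV. (mexp (t *\<^sub>R X) $ j $ i) *\<^sub>R
        (\<tau> (mexp (t *\<^sub>R X)) ** Fj \<tau> B X i s ** \<tau> (mexp ((-t) *\<^sub>R X))))" for t s
  proof -
    have "(\<Sum>i\<in>UNIV. (mexp (t *\<^sub>R X) $ j $ i) *\<^sub>R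
        (\<tau> (mexp (t *\<^sub>R X)) ** Fj \<tau> B X i s ** \<tau> (mexp ((-t) *\<^sub>R X))))
      = (\<Sum>k\<in>UNIV. ((mexp (t *\<^sub>R X) ** mexp (s *\<^sub>R X)) $ j $ k) *\<^sub>R
          (\<tau> (mexp (t *\<^sub>R X)) ** \<tau> (mexp (s *\<^sub>R X)) ** B k ** (\<tau> (mexp ((-s) *\<^sub>R X)) ** \<tau> (mexp ((-t) *\<^sub>R X)))))"
      unfolding Fj_def by (rule cov_comp)
    also have "\<dots> = Fj \<tau> B X j (t + s)"
    proof -
      have e1: "\<tau> (mexp (t *\<^sub>R X)) ** \<tau> (mexp (s *\<^sub>R X)) = \<tau> (mexp ((t + s) *\<^sub>R X))"
        by (simp add: hom[OF inG inG, symmetric] mexp_scaled_add)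
      have e2: "\<tau> (mexp ((-s) *\<^sub>R X)) ** \<tau> (mexp ((-t) *\<^sub>R X)) = \<tau> (mexp ((-(t + s)) *\<^sub>R X))"
      proof -
        have m: "-(t + s) = -s + -t" by simp
        show ?thesis unfolding m by (simp only: hom[OF inG inG, symmetric] mexp_scaled_add)
      qed
      have e3: "mexp (t *\<^sub>R X) ** mexp (s *\<^sub>R X) = mexp ((t + s) *\<^sub>R X)"
        by (simp add: mexp_scaled_add)
      show ?thesis unfolding e1 e2 e3 Fj_def ..
    qed
    finally show ?thesis by simp
  qed
  have dt: "(Fj \<tau> B X j has_vector_derivative 0) (at t)" for t
  proof -
    define S where "S = \<tau> (mexp (t *\<^sub>R X))"
    define R where "R = \<tau> (mexp ((-t) *\<^sub>R X))"
    define c where "c i = mexp (t *\<^sub>R X) $ j $ i" for i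
    have a: "((\<lambda>s. S ** Fj \<tau> B X i s) has_vector_derivative 0) (at 0)" for i
      using matmul_vd[OF has_vector_derivative_const[of S] d0[of i]] by simp
    have b: "((\<lambda>s. S ** Fj \<tau> B X i s ** R) has_vector_derivative 0) (at 0)" for i
      using matmul_vd[OF a has_vector_derivative_const[of R]] by simp
    have cc: "((\<lambda>s. c i *\<^sub>R (S ** Fj \<tau> B X i s ** R)) has_vector_derivative 0) (at 0)" for i
      using bounded_linear.has_vector_derivative[OF bounded_linear_scaleR_right b] by simp
    have g0: "((\<lambda>s. \<Sum>i\<in>UNIV. c i *\<^sub>R (S ** Fj \<tau> B X i s ** R)) has_vector_derivative 0) (at ((\<lambda>u. u - t) t))"
      using has_vector_derivative_sum[of UNIV, OF cc] by simp
    have sh: "((\<lambda>u::real. u - t) has_vector_derivative 1) (at t)"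
      by (intro derivative_eq_intros) auto
    have "(((\<lambda>s. \<Sum>i\<in>UNIV. c i *\<^sub>R (S ** Fj \<tau> B X i s ** R)) \<circ> (\<lambda>u. u - t)) has_vector_derivative 0) (at t)"
      using vector_diff_chain_at[OF sh g0] by simp
    moreover have "((\<lambda>s. \<Sum>i\<in>UNIV. c i *\<^sub>R (S ** Fj \<tau> B X i s ** R)) \<circ> (\<lambda>u. u - t)) = Fj \<tau> B X j"
    proof
      fix u show "((\<lambda>s. \<Sum>i\<in>UNIV. c i *\<^sub>R (S ** Fj \<tau> B X i s ** R)) \<circ> (\<lambda>u. u - t)) u = Fj \<tau> B X j u"
        using shift[of t "u - t"] by (simp add: S_def R_def c_def)
    qed
    ultimately show ?thesis by simp
  qed
  obtain c where c: "\<And>x. x \<in> UNIV \<Longrightarrow> Fj \<tau> B X j x = c"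
    by (rule has_vector_derivative_zero_constant[of UNIV "Fj \<tau> B X j"]) (auto simp: dt)
  show ?thesis using c[of t] c[of 0] Fj_zero[of \<tau> B X j, OF one] by simp
qed

definition crd :: "('a::real_vector) set \<Rightarrow> 'a \<Rightarrow> 'a \<Rightarrow> real" where
  "crd T v A = Real_Vector_Spaces.representation T A v"

definition Pj :: "('a::real_vector) set \<Rightarrow> 'a set \<Rightarrow> 'a \<Rightarrow> 'a" where
  "Pj T B0 A = (\<Sum>v\<in>B0. crd T v A *\<^sub>R v)"

definition Psi :: "(real^'n^'n) set \<Rightarrow> (real^'n^'n) list \<Rightarrow> real^'n^'n \<Rightarrow> real^'n^'n" where
  "Psi T xs A = foldr (\<lambda>v M. mexp (crd T v A *\<^sub>R v) ** M) xs (mat 1)"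

definition fmap :: "(real^'n^'n) set \<Rightarrow> (real^'n^'n) set \<Rightarrow> (real^'n^'n) list \<Rightarrow> real^'n^'n \<Rightarrow> real^'n^'n" where
  "fmap T B0 xs A = Psi T xs A ** mexp (A - Pj T B0 A)"

locale bsetup =
  fixes T B0 :: "('a::euclidean_space) set"
  assumes indT: "independent T" and spT: "span T = UNIV" and B0T: "B0 \<subseteq> T"
begin

lemma finT: "finite T" using independent_bound[OF indT] by simp
lemma finB0: "finite B0" using finite_subset[OF B0T finT] .

lemma crd_add: "crd T v (x + y) = crd T v x + crd T v y"
  unfolding crd_def using representation_add[OF indT, of y x] spT by simp

lemma crd_scale: "crd T v (r *\<^sub>R x) = r * crd T v x"
  unfolding crd_def using representation_scale[OF indT, of x r] spT by simp

lemma crd_zero: "crd T v 0 = 0"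
  unfolding crd_def by (simp add: representation_zero)

lemma linear_crd: "linear (crd T v)"
  by (rule linearI) (simp_all add: crd_add crd_scale)

lemma bl_crd: "bounded_linear (crd T v)"
  using linear_crd linear_conv_bounded_linear by blast

lemma crd_diff: "crd T v (x - y) = crd T v x - crd T v y"
  using linear_diff[OF linear_crd] by blast

lemma linear_Pj: "linear (Pj T B0)"
  by (rule linearI) (simp_all add: Pj_def crd_add crd_scale scaleR_add_left sum.distrib scaleR_sum_right)

lemma bl_Pj: "bounded_linear (Pj T B0)"
  using linear_Pj linear_conv_bounded_linear by blast

lemma crd_basis: "w \<in> T \<Longrightarrow> crd T v w = (if v = w then 1 else 0)"
  unfolding crd_def using representation_basis[OF indT] by simp

lemma crd_Pj: "v \<in> T \<Longrightarrow> crd T v (Pj T B0 A) = (if v \<in> B0 then crd T v A else 0)"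
proof -
  assume v: "v \<in> T"
  have "crd T v (Pj T B0 A) = (\<Sum>w\<in>B0. crd T v (crd T w A *\<^sub>R w))"
    unfolding Pj_def using linear_sum[OF linear_crd[of v], where g="\<lambda>w. crd T w A *\<^sub>R w" and S=B0] by (simp add: o_def)
  also have "\<dots> = (\<Sum>w\<in>B0. crd T w A * (if v = w then 1 else 0))"
    using B0T by (intro sum.cong refl) (auto simp: crd_scale crd_basis)
  also have "\<dots> = (if v \<in> B0 then crd T v A else 0)"
    using finB0 by (simp add: if_distrib[of "\<lambda>c. _ * c"] sum.delta cong: if_cong)
  finally show ?thesis .
qed

lemma Pj_kill: "Pj T B0 (A - Pj T B0 A) = 0"
proof -
  have "crd T v (A - Pj T B0 A) = 0" if "v \<in> B0" for v using that B0T by (auto simp: crd_diff crd_Pj)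
  then show ?thesis by (simp add: Pj_def[of T B0 "A - Pj T B0 A"])
qed

lemma Pj_span: "u \<in> span B0 \<Longrightarrow> Pj T B0 u = u"
proof -
  assume u: "u \<in> span B0"
  have indB0: "independent B0" using indT B0T dependent_mono by blast
  have "Pj T B0 u = (\<Sum>v\<in>B0. Real_Vector_Spaces.representation B0 u v *\<^sub>R v)"
    unfolding Pj_def crd_def using representation_extend[OF indT u B0T] by simp
  also have "\<dots> = u" by (rule sum_representation_eq[OF indB0 u finB0 order_refl])
  finally show ?thesis .
qed

end

lemma Psi_Cons: "Psi T (v # xs) A = mexp (crd T v A *\<^sub>R v) ** Psi T xs A"
  by (simp add: Psi_def)

lemma Psi_Nil: "Psi T [] A = mat 1"
  by (simp add: Psi_def)

lemma Psi_zero: "bsetup T B0 \<Longrightarrow> Psi T xs 0 = mat 1"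
  by (induction xs) (simp_all add: Psi_Cons Psi_Nil bsetup.crd_zero)

lemma cont_crd_line: "bsetup T B0 \<Longrightarrow> continuous_on UNIV (\<lambda>A. crd T v A *\<^sub>R (v::real^'n^'n))"
  by (intro continuous_intros linear_continuous_on bsetup.bl_crd) assumption

lemma Psi_cont: "bsetup T B0 \<Longrightarrow> continuous_on UNIV (Psi T xs)"
proof (induction xs)
  case Nil then show ?case by (simp add: Psi_Nil[abs_def])
next
  case (Cons v xs)
  have "continuous_on UNIV (\<lambda>A. mexp (crd T v A *\<^sub>R v))"
    by (rule continuous_on_compose2[OF continuous_on_mexp cont_crd_line[OF Cons.prems]]) auto
  then show ?case
    unfolding Psi_Cons[abs_def]
    by (rule bounded_bilinear.continuous_on[OF bounded_bilinear_matmul _ Cons.IH[OF Cons.prems]])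
qed

lemma mexp_line_fd:
  assumes "bounded_linear (l :: real^'n^'n \<Rightarrow> real^'n^'n)"
  shows "((\<lambda>A. mexp (l A)) has_derivative l) (at 0)"
proof -
  have d1: "(l has_derivative l) (at 0)" by (rule bounded_linear_imp_has_derivative[OF assms])
  have "l 0 = 0" by (rule linear_0[OF bounded_linear.linear[OF assms]])
  then have d2: "(mexp has_derivative (\<lambda>H. H)) (at (l 0))" using mexp_has_derivative_0 by simp
  from diff_chain_at[OF d1 d2] show ?thesis by (simp add: o_def)
qed

lemma Psi_deriv:
  assumes bs: "bsetup T B0" and dist: "distinct xs"
  shows "(Psi T xs has_derivative (\<lambda>h. \<Sum>v\<in>set xs. crd T v h *\<^sub>R v)) (at 0)"
  using dist
proof (induction xs)
  case Nil then show ?case by (simp add: Psi_Nil[abs_def])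
next
  case (Cons v xs)
  have bl: "bounded_linear (\<lambda>A. crd T v A *\<^sub>R v)"
    by (rule bounded_linear_compose[OF bounded_linear_scaleR_left bsetup.bl_crd[OF bs]])
  have d1: "((\<lambda>A. mexp (crd T v A *\<^sub>R v)) has_derivative (\<lambda>A. crd T v A *\<^sub>R v)) (at 0)"
    by (rule mexp_line_fd[OF bl])
  have IH: "(Psi T xs has_derivative (\<lambda>h. \<Sum>v\<in>set xs. crd T v h *\<^sub>R v)) (at 0)"
    using Cons by simp
  have "((\<lambda>A. mexp (crd T v A *\<^sub>R v) ** Psi T xs A) has_derivative
     (\<lambda>h. mexp (crd T v 0 *\<^sub>R v) ** (\<Sum>v\<in>set xs. crd T v h *\<^sub>R v) + (crd T v h *\<^sub>R v) ** Psi T xs 0)) (at 0)"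
    by (rule matmul_fd[OF d1 IH])
  then show ?case
    unfolding Psi_Cons[abs_def]
    by (rule has_derivative_eq_rhs)
       (use Cons.prems in \<open>auto simp: bsetup.crd_zero[OF bs] Psi_zero[OF bs] add.commute\<close>)
qed

lemma Psi_in:
  assumes "\<forall>v\<in>set xs. \<forall>t. mexp (t *\<^sub>R v) \<in> H" "mat 1 \<in> H" "\<forall>a b. a \<in> H \<longrightarrow> b \<in> H \<longrightarrow> a ** b \<in> H"
  shows "Psi T xs A \<in> H"
  using assms(1) by (induction xs) (simp_all add: Psi_Cons Psi_Nil assms(2,3))

lemma fmap_zero: "bsetup T B0 \<Longrightarrow> fmap T B0 xs 0 = mat 1"
  by (simp add: fmap_def Psi_zero bsetup.crd_zero Pj_def)

lemma fmap_cont: "bsetup T B0 \<Longrightarrow> continuous_on UNIV (fmap T B0 xs)"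
proof -
  assume bs: "bsetup T B0"
  have "continuous_on UNIV (\<lambda>A. A - Pj T B0 A)"
    by (intro continuous_intros linear_continuous_on bsetup.bl_Pj[OF bs])
  then have "continuous_on UNIV (\<lambda>A. mexp (A - Pj T B0 A))"
    by (rule continuous_on_compose2[OF continuous_on_mexp]) auto
  then show ?thesis
    unfolding fmap_def[abs_def]
    by (rule bounded_bilinear.continuous_on[OF bounded_bilinear_matmul Psi_cont[OF bs]])
qed

lemma fmap_deriv:
  assumes bs: "bsetup T B0" and dist: "distinct xs" and set: "set xs = B0"
  shows "(fmap T B0 xs has_derivative (\<lambda>h. h)) (at 0)"
proof -
  have bl: "bounded_linear (\<lambda>A. A - Pj T B0 A)"
    by (intro bounded_linear_sub bounded_linear_ident bsetup.bl_Pj[OF bs])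
  have d2: "((\<lambda>A. mexp (A - Pj T B0 A)) has_derivative (\<lambda>A. A - Pj T B0 A)) (at 0)"
    by (rule mexp_line_fd[OF bl])
  have "(fmap T B0 xs has_derivative
     (\<lambda>h. Psi T xs 0 ** (h - Pj T B0 h) + (\<Sum>v\<in>set xs. crd T v h *\<^sub>R v) ** mexp (0 - Pj T B0 0))) (at 0)"
    unfolding fmap_def[abs_def] by (rule matmul_fd[OF Psi_deriv[OF bs dist] d2])
  then show ?thesis
    by (rule has_derivative_eq_rhs)
       (auto simp: Psi_zero[OF bs] set Pj_def[symmetric] linear_0[OF bsetup.linear_Pj[OF bs]])
qed

lemma matpow_in:
  assumes G: "matrix_lie_group G" and M: "M \<in> G"
  shows "matpow M n \<in> G"
proof -
  have one: "mat 1 \<in> G" and mul: "\<forall>g\<in>G. \<forall>h\<in>G. g ** h \<in> G"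
    using G unfolding matrix_lie_group_def by blast+
  show ?thesis by (induction n) (simp_all add: one mul M)
qed

lemma int_in_G:
  assumes G: "matrix_lie_group G" and p: "mexp Y \<in> G" and m: "mexp (- Y) \<in> G"
  shows "mexp (of_int k *\<^sub>R Y) \<in> G"
proof (cases "k \<ge> 0")
  case True
  then have e: "of_int k *\<^sub>R Y = real (nat k) *\<^sub>R Y" by simp
  show ?thesis unfolding e mexp_nat by (rule matpow_in[OF G p])
next
  case False
  then have e: "of_int k *\<^sub>R Y = real (nat (- k)) *\<^sub>R (- Y)" by simp
  show ?thesis unfolding e mexp_nat by (rule matpow_in[OF G m])
qed

lemma floor_bound:
  assumes y: "y > 0"
  shows "\<bar>of_int \<lfloor>t / y\<rfloor> * y - t\<bar> \<le> y"
proof -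
  have a: "of_int \<lfloor>t / y\<rfloor> \<le> t / y" by (rule of_int_floor_le)
  have b: "t / y < of_int \<lfloor>t / y\<rfloor> + 1" using floor_correct[of "t / y"] by simp
  have a': "of_int \<lfloor>t / y\<rfloor> * y \<le> t" using a y by (simp add: le_divide_eq)
  have b': "t < (of_int \<lfloor>t / y\<rfloor> + 1) * y" using b y by (simp add: divide_less_eq)
  show ?thesis using a' b' by (simp add: algebra_simps)
qed

lemma line_in_G:
  assumes G: "matrix_lie_group G"
    and Yin: "\<And>n. mexp (Y n) \<in> G" "\<And>n. mexp (- Y n) \<in> G"
    and Ynz: "\<And>n. Y n \<noteq> 0"
    and Y0: "Y \<longlonglongrightarrow> 0"
    and Uw: "(\<lambda>n. Y n /\<^sub>R norm (Y n)) \<longlonglongrightarrow> w"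
  shows "mexp (t *\<^sub>R w) \<in> G"
proof -
  define y where "y n = norm (Y n)" for n
  define u where "u n = Y n /\<^sub>R norm (Y n)" for n
  define k where "k n = \<lfloor>t / y n\<rfloor>" for n
  define Z where "Z n = of_int (k n) *\<^sub>R Y n" for n
  have ypos: "y n > 0" for n using Ynz by (simp add: y_def)
  have Yu: "Y n = y n *\<^sub>R u n" for n using ypos[of n] by (simp add: y_def u_def)
  have ZG: "mexp (Z n) \<in> G" for n unfolding Z_def by (rule int_in_G[OF G Yin])
  have bound: "norm (Z n - t *\<^sub>R w) \<le> y n + \<bar>t\<bar> * norm (u n - w)" for n
  proof -
    have nu: "norm (u n) = 1" using ypos[of n] by (simp add: u_def y_def)
    have eq: "Z n - t *\<^sub>R w = (of_int (k n) * y n - t) *\<^sub>R u n + t *\<^sub>R (u n - w)"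
      by (simp add: Z_def Yu algebra_simps)
    have "norm (Z n - t *\<^sub>R w) \<le> norm ((of_int (k n) * y n - t) *\<^sub>R u n) + norm (t *\<^sub>R (u n - w))"
      unfolding eq by (rule norm_triangle_ineq)
    also have "\<dots> = \<bar>of_int (k n) * y n - t\<bar> + \<bar>t\<bar> * norm (u n - w)" by (simp add: nu)
    also have "\<dots> \<le> y n + \<bar>t\<bar> * norm (u n - w)"
      using floor_bound[OF ypos[of n], of t] by (simp add: k_def)
    finally show ?thesis .
  qed
  have yt: "y \<longlonglongrightarrow> 0" unfolding y_def[abs_def] by (rule tendsto_norm_zero[OF Y0])
  have ut: "(\<lambda>n. norm (u n - w)) \<longlonglongrightarrow> 0"
    using Uw unfolding u_def[symmetric] by (intro tendsto_norm_zero) (simp add: LIM_zero)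
  have bt: "(\<lambda>n. y n + \<bar>t\<bar> * norm (u n - w)) \<longlonglongrightarrow> 0"
    using tendsto_add[OF yt tendsto_mult[OF tendsto_const ut]] by simp
  have "(\<lambda>n. Z n - t *\<^sub>R w) \<longlonglongrightarrow> 0"
    by (rule Lim_null_comparison[OF _ bt]) (simp add: bound)
  then have Zt: "Z \<longlonglongrightarrow> t *\<^sub>R w" by (rule LIM_zero_cancel)
  have Et: "(\<lambda>n. mexp (Z n)) \<longlonglongrightarrow> mexp (t *\<^sub>R w)"
    by (rule isCont_tendsto_compose[OF isCont_mexp Zt])
  obtain C where C: "closed C" "G = GL \<inter> C"
    using G unfolding matrix_lie_group_def closedin_closed by blast
  have "mexp (t *\<^sub>R w) \<in> C"
    by (rule closed_sequentially[OF C(1) _ Et]) (use ZG C(2) in auto)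
  moreover have "mexp (t *\<^sub>R w) \<in> GL" by (simp add: GL_def mexp_invertible)
  ultimately show ?thesis using C(2) by blast
qed

lemma cartan_nbhd:
  fixes G H S :: "(real^'n^'n) set"
  assumes G: "matrix_lie_group G"
    and HG: "H \<subseteq> G" and H1: "mat 1 \<in> H" and Hmul: "\<forall>a b. a \<in> H \<longrightarrow> b \<in> H \<longrightarrow> a ** b \<in> H"
    and SH: "\<forall>v\<in>S. \<forall>t. mexp (t *\<^sub>R v) \<in> H"
    and lie: "lie_algebra G \<subseteq> span S"
  shows "\<exists>e>0. \<forall>g\<in>G. dist g (mat 1) < e \<longrightarrow> g \<in> H"
proof (rule ccontr)
  assume nc: "\<not> (\<exists>e>0. \<forall>g\<in>G. dist g (mat 1) < e \<longrightarrow> g \<in> H)"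
  obtain B0 where B0S: "B0 \<subseteq> S" and indB0: "independent B0" and SB0: "S \<subseteq> span B0"
    by (rule maximal_independent_subset[of S])
  obtain T where B0T: "B0 \<subseteq> T" and "T \<subseteq> UNIV" and indT: "independent T" and spT': "UNIV \<subseteq> span T"
    by (rule maximal_independent_subset_extend[of B0 UNIV, OF _ indB0]) simp
  have bs: "bsetup T B0" by unfold_locales (use indT spT' B0T in auto)
  obtain xs where xs: "set xs = B0" "distinct xs"
    using finite_distinct_list[OF bsetup.finB0[OF bs]] by blast
  define f where "f = fmap T B0 xs"
  define P where "P = Pj T B0"
  have f0: "f 0 = mat 1" unfolding f_def by (rule fmap_zero[OF bs])
  have key: "\<exists>\<epsilon>>0. ball (mat 1) \<epsilon> \<subseteq> f ` ball 0 r" if r: "r > 0" for r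
  proof -
    have "f 0 \<in> interior (f ` ball 0 r)"
    proof (rule sussmann_open_mapping[where f'="\<lambda>h. h" and g'="\<lambda>h. h" and S=UNIV])
      show "continuous_on UNIV f" unfolding f_def by (rule fmap_cont[OF bs])
      show "(f has_derivative (\<lambda>h. h)) (at 0)" unfolding f_def by (rule fmap_deriv[OF bs xs(2,1)])
      show "bounded_linear (\<lambda>h::real^'n^'n. h)" by (rule bounded_linear_ident)
      show "(\<lambda>h::real^'n^'n. h) \<circ> (\<lambda>h. h) = id" by (simp add: id_def o_def)
      show "0 \<in> interior (ball (0::real^'n^'n) r)" using r by simp
    qed auto
    then show ?thesis using f0 by (simp add: mem_interior)
  qed
  have "\<exists>A. norm A < inverse (real (Suc n)) \<and> f A \<in> G \<and> f A \<notin> H" for n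
  proof -
    obtain \<epsilon> where \<epsilon>: "\<epsilon> > 0" "ball (mat 1) \<epsilon> \<subseteq> f ` ball 0 (inverse (real (Suc n)))"
      using key[of "inverse (real (Suc n))"] by auto
    obtain g where g: "g \<in> G" "dist g (mat 1) < \<epsilon>" "g \<notin> H" using nc \<epsilon>(1) by blast
    have "g \<in> ball (mat 1) \<epsilon>" using g(2) by (simp add: dist_commute)
    then obtain A where "A \<in> ball 0 (inverse (real (Suc n)))" "g = f A" using \<epsilon>(2) by blast
    then show ?thesis using g by (auto simp: dist_norm)
  qed
  then obtain A where A: "\<And>n. norm (A n) < inverse (real (Suc n))" "\<And>n. f (A n) \<in> G" "\<And>n. f (A n) \<notin> H"
    by metis
  define Y where "Y n = A n - P (A n)" for n
  have PY: "P (Y n) = 0" for n unfolding Y_def P_def by (rule bsetup.Pj_kill[OF bs])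
  have PsiH: "Psi T xs a \<in> H" for a
    by (rule Psi_in) (use SH B0S xs(1) H1 Hmul in auto)
  have GL: "\<And>g. g \<in> G \<Longrightarrow> invertible g" and Ginv: "\<And>g. g \<in> G \<Longrightarrow> matrix_inv g \<in> G"
    and Gmul: "\<And>g h. g \<in> G \<Longrightarrow> h \<in> G \<Longrightarrow> g ** h \<in> G"
    using G unfolding matrix_lie_group_def GL_def by blast+
  have fA: "f (A n) = Psi T xs (A n) ** mexp (Y n)" for n
    unfolding f_def fmap_def Y_def P_def ..
  have YG: "mexp (Y n) \<in> G" for n
  proof -
    have pg: "Psi T xs (A n) \<in> G" using PsiH HG by blast
    have "matrix_inv (Psi T xs (A n)) ** f (A n) = mexp (Y n)"
      unfolding fA by (simp add: matrix_mul_assoc matrix_inv_props[OF GL[OF pg]])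
    moreover have "matrix_inv (Psi T xs (A n)) ** f (A n) \<in> G"
      by (rule Gmul[OF Ginv[OF pg] A(2)])
    ultimately show ?thesis by simp
  qed
  have YH: "mexp (Y n) \<notin> H" for n
  proof
    assume "mexp (Y n) \<in> H"
    then have "f (A n) \<in> H" unfolding fA using PsiH Hmul by blast
    then show False using A(3) by blast
  qed
  have Ynz: "Y n \<noteq> 0" for n using YH[of n] H1 by auto
  have YmG: "mexp (- Y n) \<in> G" for n using Ginv[OF YG[of n]] by (simp add: matrix_inv_mexp)
  have At: "A \<longlonglongrightarrow> 0"
  proof (rule Lim_null_comparison[OF _ LIMSEQ_inverse_real_of_nat])
    show "\<forall>\<^sub>F n in sequentially. norm (A n) \<le> inverse (real (Suc n))"
      using A(1) by (simp add: less_imp_le)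
  qed
  have blP: "bounded_linear P" unfolding P_def by (rule bsetup.bl_Pj[OF bs])
  have Yt: "Y \<longlonglongrightarrow> 0"
  proof -
    have "(\<lambda>n. A n - P (A n)) \<longlonglongrightarrow> 0 - P 0"
      by (intro tendsto_diff At bounded_linear.tendsto[OF blP])
    then show ?thesis unfolding Y_def[abs_def] using linear_0[OF bounded_linear.linear[OF blP]] by simp
  qed
  define U where "U n = Y n /\<^sub>R norm (Y n)" for n
  have Us: "U n \<in> sphere 0 1" for n using Ynz[of n] by (simp add: U_def)
  obtain w \<phi> where w: "w \<in> sphere 0 1" and \<phi>: "strict_mono \<phi>" and Uw: "(U \<circ> \<phi>) \<longlonglongrightarrow> w"
    using compact_imp_seq_compact[OF compact_sphere[of "0::real^'n^'n" 1]] Us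
    unfolding seq_compact_def by metis
  have Pw: "P w = 0"
  proof -
    have "(\<lambda>n. P ((U \<circ> \<phi>) n)) \<longlonglongrightarrow> P w" by (rule bounded_linear.tendsto[OF blP Uw])
    moreover have "P ((U \<circ> \<phi>) n) = 0" for n
      unfolding U_def o_def using PY[of "\<phi> n"] linear_cmul[OF bounded_linear.linear[OF blP]] by simp
    ultimately show ?thesis using LIMSEQ_unique[OF _ tendsto_const] by simp
  qed
  have "mexp (t *\<^sub>R w) \<in> G" for t
  proof (rule line_in_G[OF G])
    show "mexp ((Y \<circ> \<phi>) n) \<in> G" "mexp (- (Y \<circ> \<phi>) n) \<in> G" "(Y \<circ> \<phi>) n \<noteq> 0" for n
      using YG YmG Ynz by auto
    show "(Y \<circ> \<phi>) \<longlonglongrightarrow> 0" by (rule LIMSEQ_subseq_LIMSEQ[OF Yt \<phi>])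
    show "(\<lambda>n. (Y \<circ> \<phi>) n /\<^sub>R norm ((Y \<circ> \<phi>) n)) \<longlonglongrightarrow> w" using Uw by (simp add: U_def o_def)
  qed
  then have "w \<in> lie_algebra G" by (simp add: lie_algebra_def)
  then have "w \<in> span S" using lie by blast
  then have "w \<in> span B0" using SB0 span_mono span_span by blast
  then have "P w = w" unfolding P_def by (rule bsetup.Pj_span[OF bs])
  then have "w = 0" using Pw by simp
  then show False using w by simp
qed

lemma cont_entry: "continuous_on S (\<lambda>g::real^'n^'n. g $ j $ k)"
proof -
  have "bounded_linear (\<lambda>g::real^'n^'n. g $ j $ k)"
    using bounded_linear_compose[OF bounded_linear_vec_nth[where i=k] bounded_linear_vec_nth[where i=j]]
    by (simp add: o_def)
  then show ?thesis by (rule linear_continuous_on)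
qed

theorem lemma2p4:
  fixes G :: "(real^'D^'D) set"
    and L :: "nat \<Rightarrow> real^'D^'D" and l :: nat
    and \<tau> :: "real^'D^'D \<Rightarrow> 'k::real_normed_field^'N^'N"
    and B :: "'D \<Rightarrow> 'k^'N^'N"
  assumes "matrix_lie_group G"
    and "\<forall>\<alpha>\<in>{1..l}. L \<alpha> \<in> lie_algebra G"
    and "span (L ` {1..l}) = lie_algebra G"
    and "representation G \<tau>"
    and "\<forall>X\<in>lie_algebra G. (\<lambda>t::real. \<tau> (mexp (t *\<^sub>R X))) differentiable (at 0)"
  shows "(covariant G \<tau> B \<longrightarrow>
           (\<forall>\<alpha>\<in>{1..l}. \<forall>j. (\<Sum>k\<in>UNIV. (L \<alpha> $ j $ k) *\<^sub>R B k)
                = B j ** dtau \<tau> (L \<alpha>) - dtau \<tau> (L \<alpha>) ** B j))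
       \<and> (connected G \<longrightarrow>
           (\<forall>\<alpha>\<in>{1..l}. \<forall>j. (\<Sum>k\<in>UNIV. (L \<alpha> $ j $ k) *\<^sub>R B k)
                = B j ** dtau \<tau> (L \<alpha>) - dtau \<tau> (L \<alpha>) ** B j)
           \<longrightarrow> covariant G \<tau> B)"
proof -
  note G = assms(1) and rep = assms(4)
  have G1: "mat 1 \<in> G" and Ginv: "\<And>g. g \<in> G \<Longrightarrow> matrix_inv g \<in> G"
    and Gmul: "\<And>g h. g \<in> G \<Longrightarrow> h \<in> G \<Longrightarrow> g ** h \<in> G"
    and GL: "\<And>g. g \<in> G \<Longrightarrow> invertible g"
    using G unfolding matrix_lie_group_def GL_def by blast+
  have one: "\<tau> (mat 1) = mat 1" by (rule tau_one[OF rep G1])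
  show ?thesis
  proof (intro conjI impI)
    assume cov: "covariant G \<tau> B"
    show "\<forall>\<alpha>\<in>{1..l}. \<forall>j. (\<Sum>k\<in>UNIV. (L \<alpha> $ j $ k) *\<^sub>R B k) = B j ** dtau \<tau> (L \<alpha>) - dtau \<tau> (L \<alpha>) ** B j"
      using direction1[OF G rep _ _ cov] assms(2,5) by blast
  next
    assume conn: "connected G"
      and cond: "\<forall>\<alpha>\<in>{1..l}. \<forall>j. (\<Sum>k\<in>UNIV. (L \<alpha> $ j $ k) *\<^sub>R B k) = B j ** dtau \<tau> (L \<alpha>) - dtau \<tau> (L \<alpha>) ** B j"
    define H where "H = Hset G \<tau> B"
    have HG: "H \<subseteq> G" by (auto simp: H_def Hset_def)
    have H1: "mat 1 \<in> H"
      using G1 by (simp add: H_def Hset_def one mat1_entry if_distrib[of "\<lambda>c. c *\<^sub>R _"] sum.delta cong: if_cong)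
    have Hmul: "\<forall>a b. a \<in> H \<longrightarrow> b \<in> H \<longrightarrow> a ** b \<in> H"
      unfolding H_def using H_mult[OF G rep] by blast
    have SH: "\<forall>v\<in>L ` {1..l}. \<forall>t. mexp (t *\<^sub>R v) \<in> H"
    proof (intro ballI allI)
      fix v t assume "v \<in> L ` {1..l}"
      then obtain \<alpha> where \<alpha>: "\<alpha> \<in> {1..l}" "v = L \<alpha>" by blast
      have X: "v \<in> lie_algebra G" using assms(2) \<alpha> by auto
      have d: "(\<lambda>t::real. \<tau> (mexp (t *\<^sub>R v))) differentiable (at 0)" using assms(5) X by blast
      have c: "\<forall>j. (\<Sum>k\<in>UNIV. (v $ j $ k) *\<^sub>R B k) = B j ** dtau \<tau> v - dtau \<tau> v ** B j"
        using cond \<alpha> by blast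
      have gG: "mexp (t *\<^sub>R v) \<in> G" using X by (simp add: lie_algebra_def)
      have "(\<Sum>k\<in>UNIV. (mexp (t *\<^sub>R v) $ j $ k) *\<^sub>R (\<tau> (mexp (t *\<^sub>R v)) ** B k ** \<tau> (matrix_inv (mexp (t *\<^sub>R v))))) = B j" for j
        using Fj_const[OF G rep X d c, of j t] by (simp add: Fj_def matrix_inv_mexp)
      then show "mexp (t *\<^sub>R v) \<in> H"
        using cov_iff_H[OF G rep gG] gG by (simp add: H_def Hset_def)
    qed
    have lie: "lie_algebra G \<subseteq> span (L ` {1..l})" using assms(3) by simp
    obtain e where e: "e > 0" "\<forall>g\<in>G. dist g (mat 1) < e \<longrightarrow> g \<in> H"
      using cartan_nbhd[OF G HG H1 Hmul SH lie] by blast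
    have op: "openin (top_of_set G) H"
      unfolding openin_euclidean_subtopology_iff
    proof (intro conjI ballI HG)
      fix h assume hH: "h \<in> H"
      have hG: "h \<in> G" using hH HG by blast
      define hi where "hi = matrix_inv h"
      define c where "c = real CARD('D) * real CARD('D) * real CARD('D)"
      define K where "K = norm hi * c + 1"
      have c0: "c \<ge> 0" by (simp add: c_def)
      have K0: "K > 0" unfolding K_def using c0 by (simp add: add_nonneg_pos)
      show "\<exists>d>0. \<forall>g\<in>G. dist g h < d \<longrightarrow> g \<in> H"
      proof (intro exI[of _ "e / K"] conjI ballI impI)
        show "e / K > 0" using e(1) K0 by simp
        fix g assume gG: "g \<in> G" and dg: "dist g h < e / K"
        have "dist (hi ** g) (mat 1) = norm (hi ** (g - h))"
          by (simp add: dist_norm hi_def matrix_inv_props[OF GL[OF hG]] bounded_bilinear.diff_right[OF bounded_bilinear_matmul])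
        also have "\<dots> \<le> norm hi * norm (g - h) * c"
          using norm_matmul_le[of hi "g - h"] by (simp add: c_def mult_ac)
        also have "\<dots> \<le> K * norm (g - h)"
          unfolding K_def using c0 by (simp add: algebra_simps mult_right_mono)
        also have "\<dots> < K * (e / K)" using mult_strict_left_mono[OF dg[unfolded dist_norm] K0] .
        also have "\<dots> = e" using K0 by simp
        finally have "hi ** g \<in> H" using e(2) Gmul[OF Ginv[OF hG] gG] by (simp add: hi_def)
        then have "h ** (hi ** g) \<in> H" using Hmul hH by blast
        then show "g \<in> H" by (simp add: hi_def matrix_mul_assoc matrix_inv_props[OF GL[OF hG]])
      qed
    qed
    have cl: "closedin (top_of_set G) H"
    proof -
      have tc: "continuous_on G \<tau>" using rep by (simp add: representation_def)
      have mm: "continuous_on G f \<Longrightarrow> continuous_on G g \<Longrightarrow> continuous_on G (\<lambda>x. f x ** g x)"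
        for f g :: "real^'D^'D \<Rightarrow> 'k^'N^'N"
        by (rule bounded_bilinear.continuous_on[OF bounded_bilinear_matmul])
      have "continuous_on G (\<lambda>g. \<chi> j. (\<Sum>k\<in>UNIV. (g $ j $ k) *\<^sub>R (\<tau> g ** B k)) - B j ** \<tau> g)"
        by (intro continuous_on_vec_lambda continuous_on_diff continuous_on_sum continuous_on_scaleR
              cont_entry mm tc continuous_on_const)
      from continuous_closedin_preimage_constant[OF this, of 0]
      show ?thesis
        by (simp add: H_def Hset_def vec_eq_iff)
    qed
    have "H = G" using conn H1 op cl unfolding connected_clopen by blast
    then show "covariant G \<tau> B"
      unfolding covariant_def using cov_iff_H[OF G rep] by (auto simp: H_def Hset_def)
  qed
qed

end
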